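(* Let $c_0>0$, $c>0$, $d\in\mathbb Z^+$, and let $\boldsymbol\beta=(\beta_j)_{j\ge1}$ be a sequence of non-negative reals and $(\Upsilon_{\boldsymbol\nu})_{\boldsymbol\nu\in\mathscr F}$ non-negative reals with $\Upsilon_{\boldsymbol 0}\le c_0$ and, for all $\boldsymbol\nu\in\mathscr F$, $$\Upsilon_{\boldsymbol\nu}\le\sum_{\boldsymbol m\le\boldsymbol\nu,\,\boldsymbol m\ne\boldsymbol\nu}\binom{\boldsymbol\nu}{\boldsymbol m}\Upsilon_{\boldsymbol m}c^{|\boldsymbol\nu-\boldsymbol m|}\sum_{\boldsymbol\mu\le\boldsymbol\nu-\boldsymbol m}(|\boldsymbol\mu|+1)!\,\boldsymbol\mu!\,\boldsymbol\beta^{\boldsymbol\mu}\prod_{i\ge1}S(\nu_i-m_i,\mu_i)+c_0c^{|\boldsymbol\nu|}\sum_{\boldsymbol m\le\boldsymbol\nu}\frac{(|\boldsymbol m|+d)!}{d!}\boldsymbol\beta^{\boldsymbol m}\prod_{i\ge1}S(\nu_i,m_i).$$ Then for all $\boldsymbol\nu\in\mathscr F$, $$\Upsilon_{\boldsymbol\nu}\le c_0c^{|\boldsymbol\nu|}\sum_{\boldsymbol m\le\boldsymbol\nu}\mathbb P_{\boldsymbol m}\,\boldsymbol m!\,\boldsymbol\beta^{\boldsymbol m}\prod_{i\ge1}S(\nu_i,m_i),$$ where $\mathbb P_{\boldsymbol 0}:=1$ and $\mathbb P_{\boldsymbol m}:=\frac{(|\boldsymbol m|+d)!}{\boldsymbol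 m!\,d!}+\sum_{\boldsymbol w\le\boldsymbol m,\,\boldsymbol w\ne\boldsymbol m}\mathbb P_{\boldsymbol w}(|\boldsymbol m|-|\boldsymbol w|+1)!$ for $\boldsymbol m\ne\boldsymbol 0$. If the hypotheses hold with equality, so does the conclusion.
   Context: $\mathscr F$ is the set of finitely supported multi-indices in $\mathbb N_0^{\mathbb N}$; $|\boldsymbol\nu|=\sum\nu_j$, $\boldsymbol\nu!=\prod\nu_j!$, $\boldsymbol\beta^{\boldsymbol\nu}=\prod\beta_j^{\nu_j}$, componentwise order, $\binom{\boldsymbol\nu}{\boldsymbol m}=\prod_j\binom{\nu_j}{m_j}$. $S(n,m)=\frac1{m!}\sum_{j=0}^m(-1)^{m-j}\binom mj j^n$ (Stirling numbers of the second kind, $S(0,0)=1$). *)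

theory Defs
  imports "HOL-Analysis.Analysis" "HOL-Combinatorics.Stirling"
begin

type_synonym mindex = "nat \<Rightarrow> nat"

definition msupp :: "mindex \<Rightarrow> nat set" where
  "msupp \<nu> = {j. \<nu> j \<noteq> 0}"

definition mF :: "mindex set" where
  "mF = {\<nu>. finite (msupp \<nu>)}"

definition mzero :: mindex where "mzero = (\<lambda>_. 0)"

definition mabs :: "mindex \<Rightarrow> nat" where
  "mabs \<nu> = (\<Sum>j\<in>msupp \<nu>. \<nu> j)"

definition mfact :: "mindex \<Rightarrow> real" where
  "mfact \<nu> = (\<Prod>j\<in>msupp \<nu>. fact (\<nu> j))"

definition mpow :: "(nat \<Rightarrow> real) \<Rightarrow> mindex \<Rightarrow> real" where
  "mpow \<beta> \<nu> = (\<Prod>j\<in>msupp \<nu>. \<beta> j ^ \<nu> j)"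

text \<open>binomial coefficient of multi-indices; all factors outside msupp nu equal 1 when m \<le> nu\<close>
definition mbinom :: "mindex \<Rightarrow> mindex \<Rightarrow> real" where
  "mbinom \<nu> m = (\<Prod>j\<in>msupp \<nu>. real (\<nu> j choose m j))"

text \<open>prod over i of S(nu_i, m_i) (factors with nu_i = m_i = 0 equal S(0,0)=1)\<close>
definition mStir :: "mindex \<Rightarrow> mindex \<Rightarrow> real" where
  "mStir \<nu> m = (\<Prod>j\<in>msupp \<nu> \<union> msupp m. real (Stirling (\<nu> j) (m j)))"

fun Pfuel :: "nat \<Rightarrow> nat \<Rightarrow> mindex \<Rightarrow> real" where
  "Pfuel d 0 m = 0"
| "Pfuel d (Suc k) m =
     (if m = mzero then 1
      else fact (mabs m + d) / (mfact m * fact d)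
         + (\<Sum>w\<in>{w. w \<le> m \<and> w \<noteq> m}. Pfuel d k w * fact (mabs m - mabs w + 1)))"

definition PP :: "nat \<Rightarrow> mindex \<Rightarrow> real" where
  "PP d m = Pfuel d (Suc (mabs m)) m"

definition hypRHS :: "real \<Rightarrow> real \<Rightarrow> nat \<Rightarrow> (nat \<Rightarrow> real) \<Rightarrow> (mindex \<Rightarrow> real) \<Rightarrow> mindex \<Rightarrow> real" where
  "hypRHS c0 c d \<beta> \<Upsilon> \<nu> =
     (\<Sum>m\<in>{m. m \<le> \<nu> \<and> m \<noteq> \<nu>}. mbinom \<nu> m * \<Upsilon> m * c ^ mabs (\<nu> - m) *
        (\<Sum>\<mu>\<in>{\<mu>. \<mu> \<le> \<nu> - m}. fact (mabs \<mu> + 1) * mfact \<mu> * mpow \<beta> \<mu> * mStir (\<nu> - m) \<mu>))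
     + c0 * c ^ mabs \<nu> * (\<Sum>m\<in>{m. m \<le> \<nu>}. fact (mabs m + d) / fact d * mpow \<beta> m * mStir \<nu> m)"

definition concRHS :: "real \<Rightarrow> real \<Rightarrow> nat \<Rightarrow> (nat \<Rightarrow> real) \<Rightarrow> mindex \<Rightarrow> real" where
  "concRHS c0 c d \<beta> \<nu> =
     c0 * c ^ mabs \<nu> * (\<Sum>m\<in>{m. m \<le> \<nu>}. PP d m * mfact m * mpow \<beta> m * mStir \<nu> m)"

end

theory Submission
  imports Defs
begin


definition LL :: "nat \<Rightarrow> nat \<Rightarrow> nat \<Rightarrow> nat" where
  "LL n a b = (\<Sum>k\<le>n. (n choose k) * Stirling k a * Stirling (n-k) b)"

lemma St_Suc: "Stirling (Suc m) a = a * Stirling m a + (case a of 0 \<Rightarrow> 0 | Suc a' \<Rightarrow> Stirling m a')"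
  by (cases a) auto

lemma LL_Suc: "LL (Suc n) a b = (\<Sum>k\<le>n. (n choose k) * Stirling k a * Stirling (Suc (n-k)) b)
   + (\<Sum>k\<le>n. (n choose k) * Stirling (Suc k) a * Stirling (n-k) b)"
proof -
  define f where "f k = Stirling k a * Stirling (Suc n - k) b" for k
  have "LL (Suc n) a b = (\<Sum>k\<le>Suc n. (Suc n choose k) * f k)"
    unfolding LL_def f_def by (simp add: mult.assoc)
  also have "\<dots> = f 0 + (\<Sum>k\<le>n. (n choose Suc k) * f (Suc k)) + (\<Sum>k\<le>n. (n choose k) * f (Suc k))"
    by (subst sum.atMost_Suc_shift) (simp add: algebra_simps sum.distrib)
  also have "f 0 + (\<Sum>k\<le>n. (n choose Suc k) * f (Suc k)) = (\<Sum>k\<le>Suc n. (n choose k) * f k)"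
    by (simp only: sum.atMost_Suc_shift) simp
  also have "\<dots> = (\<Sum>k\<le>n. (n choose k) * f k)" by (simp only: sum.atMost_Suc) simp
  also have "\<dots> = (\<Sum>k\<le>n. (n choose k) * Stirling k a * Stirling (Suc (n-k)) b)"
    unfolding f_def by (intro sum.cong) (auto simp: Suc_diff_le mult.assoc)
  also have "(\<Sum>k\<le>n. (n choose k) * f (Suc k)) = (\<Sum>k\<le>n. (n choose k) * Stirling (Suc k) a * Stirling (n-k) b)"
    unfolding f_def by (simp add: mult.assoc)
  finally show ?thesis .
qed

lemma LL_rec: "LL (Suc n) a b = (a+b) * LL n a b + (case b of 0 \<Rightarrow> 0 | Suc b' \<Rightarrow> LL n a b')
   + (case a of 0 \<Rightarrow> 0 | Suc a' \<Rightarrow> LL n a' b)"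
  unfolding LL_Suc St_Suc
  by (cases a; cases b) (simp_all add: LL_def algebra_simps sum.distrib sum_distrib_left)

lemma LL_eq: "LL n a b = ((a+b) choose a) * Stirling n (a+b)"
proof (induction n arbitrary: a b)
  case 0
  then show ?case by (cases a; cases b) (auto simp: LL_def)
next
  case (Suc n)
  show ?case
  proof (cases a; cases b)
    assume "a = 0" "b = 0" then show ?thesis by (simp add: LL_rec Suc)
  next
    fix b' assume "a = 0" "b = Suc b'" then show ?thesis by (simp add: LL_rec Suc)
  next
    fix a' assume "a = Suc a'" "b = 0" then show ?thesis by (simp add: LL_rec Suc)
  next
    fix a' b' assume ab: "a = Suc a'" "b = Suc b'"
    have "(Suc a' + b' choose Suc a') + (a' + Suc b' choose a') = (Suc a' + Suc b' choose Suc a')"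
      by simp
    then show ?thesis using ab by (simp add: LL_rec Suc algebra_simps)
  qed
qed


lemma msupp_le: "m \<le> \<nu> \<Longrightarrow> msupp m \<subseteq> msupp \<nu>"
  unfolding msupp_def le_fun_def by (metis (mono_tags) le_zero_eq mem_Collect_eq subsetI)

lemma le_mF: "\<nu> \<in> mF \<Longrightarrow> m \<le> \<nu> \<Longrightarrow> m \<in> mF"
  unfolding mF_def using msupp_le finite_subset by blast

lemma mF_fin: "\<nu> \<in> mF \<Longrightarrow> finite (msupp \<nu>)"
  by (simp add: mF_def)

lemma mabs_J: "finite J \<Longrightarrow> msupp m \<subseteq> J \<Longrightarrow> mabs m = (\<Sum>j\<in>J. m j)"
  unfolding mabs_def by (rule sum.mono_neutral_left) (auto simp: msupp_def)

lemma mfact_J: "finite J \<Longrightarrow> msupp m \<subseteq> J \<Longrightarrow> mfact m = (\<Prod>j\<in>J. fact (m j))"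
  unfolding mfact_def by (rule prod.mono_neutral_left) (auto simp: msupp_def)

lemma mpow_J: "finite J \<Longrightarrow> msupp m \<subseteq> J \<Longrightarrow> mpow \<beta> m = (\<Prod>j\<in>J. \<beta> j ^ m j)"
  unfolding mpow_def by (rule prod.mono_neutral_left) (auto simp: msupp_def)

lemma mStir_J: "finite J \<Longrightarrow> msupp \<nu> \<subseteq> J \<Longrightarrow> msupp m \<subseteq> J \<Longrightarrow>
   mStir \<nu> m = (\<Prod>j\<in>J. real (Stirling (\<nu> j) (m j)))"
  unfolding mStir_def by (rule prod.mono_neutral_left) (auto simp: msupp_def)

lemma mbinom_J: "finite J \<Longrightarrow> msupp \<nu> \<subseteq> J \<Longrightarrow> m \<le> \<nu> \<Longrightarrow>
   mbinom \<nu> m = (\<Prod>j\<in>J. real (\<nu> j choose m j))"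
proof -
  assume a: "finite J" "msupp \<nu> \<subseteq> J" "m \<le> \<nu>"
  have "m j = 0" if "\<nu> j = 0" for j using a(3) that by (auto simp: le_fun_def dest: spec[of _ j])
  then show ?thesis
  unfolding mbinom_def by (intro prod.mono_neutral_left) (use a in \<open>auto simp: msupp_def\<close>)
qed

lemma box_sum_prod:
  fixes f :: "nat \<Rightarrow> nat \<Rightarrow> real"
  assumes J: "finite J" "msupp \<nu> \<subseteq> J"
  shows "(\<Sum>m\<in>{m. m \<le> \<nu>}. \<Prod>j\<in>J. f j (m j)) = (\<Prod>j\<in>J. \<Sum>k\<le>\<nu> j. f j k)"
proof -
  have out: "m j = 0" if "m \<le> \<nu>" "j \<notin> J" for m j
    using msupp_le[OF that(1)] J that unfolding msupp_def by auto
  have "(\<Prod>j\<in>J. \<Sum>k\<le>\<nu> j. f j k) = (\<Sum>g\<in>PiE J (\<lambda>j. {..\<nu> j}). \<Prod>j\<in>J. f j (g j))"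
    by (rule prod_sum_PiE) (use J in auto)
  also have "\<dots> = (\<Sum>m\<in>{m. m \<le> \<nu>}. \<Prod>j\<in>J. f j (m j))"
  proof (rule sum.reindex_bij_witness[where i="\<lambda>m. restrict m J" and j="\<lambda>g j. if j \<in> J then g j else 0"])
    fix a assume "a \<in> PiE J (\<lambda>j. {..\<nu> j})"
    then show "restrict (\<lambda>j. if j \<in> J then a j else 0) J = a"
      by (auto simp: PiE_def extensional_def restrict_def fun_eq_iff)
    show "(\<lambda>j. if j \<in> J then a j else 0) \<in> {m. m \<le> \<nu>}"
      using \<open>a \<in> _\<close> by (auto simp: le_fun_def PiE_def Pi_def)
    show "(\<Prod>j\<in>J. f j ((\<lambda>j. if j \<in> J then a j else 0) j)) = (\<Prod>j\<in>J. f j (a j))"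
      by (rule prod.cong) auto
  next
    fix b assume b: "b \<in> {m. m \<le> \<nu>}"
    then show "(\<lambda>j. if j \<in> J then restrict b J j else 0) = b"
      using out by (auto simp: fun_eq_iff)
    show "restrict b J \<in> PiE J (\<lambda>j. {..\<nu> j})"
      using b by (auto simp: le_fun_def)
  qed
  finally show ?thesis by simp
qed

lemma box_finite:
  assumes "\<nu> \<in> mF" shows "finite {m. m \<le> \<nu>}"
proof -
  let ?J = "msupp \<nu>"
  have J: "finite ?J" using assms by (simp add: mF_def)
  have "{m. m \<le> \<nu>} \<subseteq> (\<lambda>g j. if j \<in> ?J then g j else 0) ` PiE ?J (\<lambda>j. {..\<nu> j})"
  proof
    fix m assume m: "m \<in> {m. m \<le> \<nu>}"
    have "m = (\<lambda>j. if j \<in> ?J then restrict m ?J j else 0)"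
      using msupp_le[of m \<nu>] m by (auto simp: fun_eq_iff msupp_def)
    moreover have "restrict m ?J \<in> PiE ?J (\<lambda>j. {..\<nu> j})" using m by (auto simp: le_fun_def)
    ultimately show "m \<in> (\<lambda>g j. if j \<in> ?J then g j else 0) ` PiE ?J (\<lambda>j. {..\<nu> j})" by blast
  qed
  then show ?thesis using finite_PiE[OF J, of "\<lambda>j. {..\<nu> j}"] finite_subset by blast
qed

lemma mStir_zero:
  assumes "m \<in> mF" "w \<in> mF" "\<not> w \<le> m" shows "mStir m w = 0"
proof -
  obtain j where j: "m j < w j" using assms(3) by (auto simp: le_fun_def not_le)
  have "j \<in> msupp w" using j by (auto simp: msupp_def)
  moreover have "finite (msupp m \<union> msupp w)" using assms by (simp add: mF_def)
  ultimately show ?thesis unfolding mStir_def using j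
    by (intro prod_zero) (auto intro!: bexI[of _ j])
qed

lemma mabs_diff:
  assumes "\<nu> \<in> mF" "m \<le> \<nu>"
  shows "mabs (\<nu> - m) = mabs \<nu> - mabs m" "mabs m \<le> mabs \<nu>"
proof -
  let ?J = "msupp \<nu>"
  have J: "finite ?J" using assms by (simp add: mF_def)
  have s1: "msupp m \<subseteq> ?J" by (rule msupp_le[OF assms(2)])
  have s2: "msupp (\<nu> - m) \<subseteq> ?J" by (auto simp: msupp_def)
  have le: "\<And>j. j \<in> ?J \<Longrightarrow> m j \<le> \<nu> j" using assms(2) by (auto simp: le_fun_def)
  show "mabs (\<nu> - m) = mabs \<nu> - mabs m"
    using mabs_J[OF J s2] mabs_J[OF J s1] mabs_J[OF J subset_refl] sum_subtractf_nat[OF le]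
    by simp
  show "mabs m \<le> mabs \<nu>"
    using mabs_J[OF J s1] mabs_J[OF J subset_refl] le by (simp add: sum_mono)
qed

lemma mabs_less:
  assumes "\<nu> \<in> mF" "m \<le> \<nu>" "m \<noteq> \<nu>" shows "mabs m < mabs \<nu>"
proof -
  let ?J = "msupp \<nu>"
  have J: "finite ?J" using assms by (simp add: mF_def)
  obtain j where j: "m j \<noteq> \<nu> j" using assms(3) by auto
  with assms(2) have "m j < \<nu> j" by (auto simp: le_fun_def dest: spec[of _ j])
  then have "j \<in> ?J" by (auto simp: msupp_def)
  have "(\<Sum>j\<in>?J. m j) < (\<Sum>j\<in>?J. \<nu> j)"
    by (rule sum_strict_mono_ex1[OF J]) (use assms(2) \<open>m j < \<nu> j\<close> \<open>j \<in> ?J\<close> in \<open>auto simp: le_fun_def\<close>)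
  then show ?thesis using mabs_J[OF J msupp_le[OF assms(2)]] mabs_J[OF J subset_refl] by simp
qed



lemma le_mzero: "(w::mindex) \<le> mzero \<longleftrightarrow> w = mzero"
  by (auto simp: le_fun_def mzero_def fun_eq_iff)

lemma msupp_mzero[simp]: "msupp mzero = {}" by (simp add: msupp_def mzero_def)

lemma Pfuel_indep:
  "\<forall>w n'. w \<in> mF \<longrightarrow> mabs w < n \<longrightarrow> mabs w < n' \<longrightarrow> Pfuel d n w = Pfuel d n' w"
proof (induction n)
  case 0 then show ?case by simp
next
  case (Suc k)
  show ?case
  proof (intro allI impI)
    fix w n' assume w: "w \<in> mF" "mabs w < Suc k" "mabs w < n'"
    then obtain k' where n': "n' = Suc k'" by (cases n') auto
    have eq: "Pfuel d k v = Pfuel d k' v" if "v \<le> w" "v \<noteq> w" for v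
    proof -
      have "mabs v < mabs w" using mabs_less[OF w(1)] that by auto
      moreover have "v \<in> mF" using le_mF[OF w(1)] that by auto
      moreover have "mabs v < k" "mabs v < k'" using calculation w n' by linarith+
      ultimately show ?thesis using Suc.IH by blast
    qed
    have S: "(\<Sum>v\<in>{v. v \<le> w \<and> v \<noteq> w}. Pfuel d k v * fact (mabs w - mabs v + 1))
       = (\<Sum>v\<in>{v. v \<le> w \<and> v \<noteq> w}. Pfuel d k' v * fact (mabs w - mabs v + 1))"
      by (rule sum.cong) (auto simp: eq)
    show "Pfuel d (Suc k) w = Pfuel d n' w"
      unfolding n' Pfuel.simps S by (rule refl)
  qed
qed

declare Pfuel.simps[simp del]

lemma aux_field: "(x::real) > 0 \<Longrightarrow> (bb::real) > 0 \<Longrightarrow> PP0 = aa / (x * bb) + ss \<Longrightarrow> (x * ss) + (aa / bb) = PP0 * x"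
  by (simp add: field_simps)

lemma PP_zero: "PP d mzero = 1"
  unfolding PP_def by (simp add: Pfuel.simps)

lemma PP_rec:
  assumes k: "k \<in> mF"
  shows "mfact k * (\<Sum>w\<in>{w. w \<le> k \<and> w \<noteq> k}. PP d w * fact (mabs k - mabs w + 1))
          + fact (mabs k + d) / fact d = PP d k * mfact k"
proof (cases "k = mzero")
  case True
  have e: "{w. w \<le> k \<and> w \<noteq> k} = {}" using True le_mzero by auto
  show ?thesis unfolding e using True by (simp add: PP_zero mfact_def mabs_def)
next
  case False
  have mf: "mfact k > 0" unfolding mfact_def by (intro prod_pos) auto
  have fd: "(fact d :: real) > 0" by simp
  have eq: "Pfuel d (mabs k) w = PP d w" if "w \<le> k" "w \<noteq> k" for w
  proof -
    have "mabs w < mabs k" using mabs_less[OF k] that by auto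
    moreover have "w \<in> mF" using le_mF[OF k] that by auto
    ultimately have "Pfuel d (mabs k) w = Pfuel d (Suc (mabs w)) w"
      using Pfuel_indep[of "mabs k" d] by blast
    then show ?thesis by (simp only: PP_def)
  qed
  have S: "(\<Sum>w\<in>{w. w \<le> k \<and> w \<noteq> k}. Pfuel d (mabs k) w * fact (mabs k - mabs w + 1))
      = (\<Sum>w\<in>{w. w \<le> k \<and> w \<noteq> k}. PP d w * fact (mabs k - mabs w + 1))"
  proof (rule sum.cong[OF refl])
    fix x assume "x \<in> {w. w \<le> k \<and> w \<noteq> k}"
    then have "Pfuel d (mabs k) x = PP d x" using eq by blast
    then show "Pfuel d (mabs k) x * fact (mabs k - mabs x + 1) = PP d x * fact (mabs k - mabs x + 1)" by (rule arg_cong)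
  qed
  have "PP d k = Pfuel d (Suc (mabs k)) k" by (simp only: PP_def)
  also have "\<dots> = fact (mabs k + d) / (mfact k * fact d)
         + (\<Sum>w\<in>{w. w \<le> k \<and> w \<noteq> k}. Pfuel d (mabs k) w * fact (mabs k - mabs w + 1))"
    using False by (simp only: Pfuel.simps if_False)
  finally have "PP d k = fact (mabs k + d) / (mfact k * fact d)
         + (\<Sum>w\<in>{w. w \<le> k \<and> w \<noteq> k}. PP d w * fact (mabs k - mabs w + 1))"
    unfolding S .
  then show ?thesis using aux_field[OF mf fd] by blast
qed

lemma per_coord:
  fixes x :: real
  shows "real ((a+b) choose a) * (fact a * (fact b * (x ^ a * x ^ b)))
     = fact (a+b) * x ^ (a+b)"
proof -
  have "fact a * fact (a + b - a) * ((a+b) choose a) = (fact (a+b) :: nat)"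
    by (rule binomial_fact_lemma) simp
  then have "real (fact a * fact b * ((a+b) choose a)) = real (fact (a+b))" by simp
  then have "fact a * fact b * real ((a+b) choose a) = (fact (a+b) :: real)"
    by (simp only: of_nat_mult of_nat_fact)
  then show ?thesis by (simp add: power_add algebra_simps)
qed

lemma L3:
  assumes \<nu>: "\<nu> \<in> mF" and w: "w \<le> \<nu>" and \<mu>: "\<mu> \<le> \<nu>"
  shows "(\<Sum>m\<in>{m. m \<le> \<nu>}. mbinom \<nu> m * mStir m w * mStir (\<nu> - m) \<mu>
            * mfact w * mfact \<mu> * mpow \<beta> w * mpow \<beta> \<mu>)
         = mfact (\<lambda>j. w j + \<mu> j) * mpow \<beta> (\<lambda>j. w j + \<mu> j) * mStir \<nu> (\<lambda>j. w j + \<mu> j)"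
proof -
  let ?J = "msupp \<nu>"
  have J: "finite ?J" using \<nu> by (simp add: mF_def)
  have sw: "msupp w \<subseteq> ?J" and s\<mu>: "msupp \<mu> \<subseteq> ?J" using msupp_le w \<mu> by auto
  have swm: "msupp (\<lambda>j. w j + \<mu> j) \<subseteq> ?J" using sw s\<mu> by (auto simp: msupp_def)
  define K where "K = mfact w * mfact \<mu> * mpow \<beta> w * mpow \<beta> \<mu>"
  have K: "K = (\<Prod>j\<in>?J. fact (w j) * fact (\<mu> j) * \<beta> j ^ w j * \<beta> j ^ \<mu> j)"
    unfolding K_def mfact_J[OF J sw] mfact_J[OF J s\<mu>] mpow_J[OF J sw] mpow_J[OF J s\<mu>]
    by (simp add: prod.distrib)
  have "(\<Sum>m\<in>{m. m \<le> \<nu>}. mbinom \<nu> m * mStir m w * mStir (\<nu> - m) \<mu>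
            * mfact w * mfact \<mu> * mpow \<beta> w * mpow \<beta> \<mu>)
      = (\<Sum>m\<in>{m. m \<le> \<nu>}. \<Prod>j\<in>?J. real (\<nu> j choose m j) * real (Stirling (m j) (w j))
              * real (Stirling ((\<nu> - m) j) (\<mu> j))) * K"
    unfolding sum_distrib_right K_def
  proof (intro sum.cong refl)
    fix m assume m: "m \<in> {m. m \<le> \<nu>}"
    have sm: "msupp m \<subseteq> ?J" using msupp_le m by auto
    have sd: "msupp (\<nu> - m) \<subseteq> ?J" by (auto simp: msupp_def)
    have mb: "mbinom \<nu> m = (\<Prod>j\<in>?J. real (\<nu> j choose m j))" using mbinom_J[OF J subset_refl] m by auto
    show "mbinom \<nu> m * mStir m w * mStir (\<nu> - m) \<mu> * mfact w * mfact \<mu> * mpow \<beta> w * mpow \<beta> \<mu> =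
          (\<Prod>j\<in>?J. real (\<nu> j choose m j) * real (Stirling (m j) (w j)) * real (Stirling ((\<nu> - m) j) (\<mu> j)))
           * (mfact w * mfact \<mu> * mpow \<beta> w * mpow \<beta> \<mu>)"
      unfolding mb mStir_J[OF J sm sw] mStir_J[OF J sd s\<mu>]
      using m by (simp add: prod.distrib mult.assoc)
  qed
  also have "\<dots> = (\<Prod>j\<in>?J. \<Sum>k\<le>\<nu> j. real (\<nu> j choose k) * real (Stirling k (w j))
              * real (Stirling (\<nu> j - k) (\<mu> j))) * K"
    using box_sum_prod[OF J subset_refl, of "\<lambda>j k. real (\<nu> j choose k) * real (Stirling k (w j))
              * real (Stirling (\<nu> j - k) (\<mu> j))"] by simp
  also have "\<dots> = (\<Prod>j\<in>?J. real (LL (\<nu> j) (w j) (\<mu> j))) * K"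
    unfolding LL_def by (simp add: mult.assoc)
  also have "\<dots> = (\<Prod>j\<in>?J. fact (w j + \<mu> j) * \<beta> j ^ (w j + \<mu> j) * real (Stirling (\<nu> j) (w j + \<mu> j)))"
    unfolding K LL_eq prod.distrib[symmetric]
    by (intro prod.cong refl) (simp add: per_coord mult.assoc)
  also have "\<dots> = mfact (\<lambda>j. w j + \<mu> j) * mpow \<beta> (\<lambda>j. w j + \<mu> j) * mStir \<nu> (\<lambda>j. w j + \<mu> j)"
    unfolding mfact_J[OF J swm] mpow_J[OF J swm] mStir_J[OF J subset_refl swm]
    by (simp add: prod.distrib)
  finally show ?thesis .
qed



definition Qf :: "nat \<Rightarrow> (nat \<Rightarrow> real) \<Rightarrow> mindex \<Rightarrow> real" where
  "Qf d \<beta> \<nu> = (\<Sum>m\<in>{m. m \<le> \<nu>}. PP d m * mfact m * mpow \<beta> m * mStir \<nu> m)"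
definition Gf :: "(nat \<Rightarrow> real) \<Rightarrow> mindex \<Rightarrow> real" where
  "Gf \<beta> \<rho> = (\<Sum>\<mu>\<in>{\<mu>. \<mu> \<le> \<rho>}. fact (mabs \<mu> + 1) * mfact \<mu> * mpow \<beta> \<mu> * mStir \<rho> \<mu>)"
definition Hf :: "nat \<Rightarrow> (nat \<Rightarrow> real) \<Rightarrow> mindex \<Rightarrow> real" where
  "Hf d \<beta> \<nu> = (\<Sum>m\<in>{m. m \<le> \<nu>}. fact (mabs m + d) / fact d * mpow \<beta> m * mStir \<nu> m)"

lemma box_ext:
  assumes \<nu>: "\<nu> \<in> mF" and \<rho>: "\<rho> \<le> \<nu>"
  shows "(\<Sum>w\<in>{w. w \<le> \<rho>}. F w * mStir \<rho> w) = (\<Sum>w\<in>{w. w \<le> \<nu>}. F w * mStir \<rho> w)"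
proof (rule sum.mono_neutral_left)
  show "finite {w. w \<le> \<nu>}" by (rule box_finite[OF \<nu>])
  show "{w. w \<le> \<rho>} \<subseteq> {w. w \<le> \<nu>}" using \<rho> order_trans by blast
  show "\<forall>i\<in>{w. w \<le> \<nu>} - {w. w \<le> \<rho>}. F i * mStir \<rho> i = 0"
  proof
    fix i assume i: "i \<in> {w. w \<le> \<nu>} - {w. w \<le> \<rho>}"
    have "mStir \<rho> i = 0"
      by (rule mStir_zero) (use i le_mF[OF \<nu>] \<rho> in auto)
    then show "F i * mStir \<rho> i = 0" by simp
  qed
qed

lemma RI:
  assumes \<nu>: "\<nu> \<in> mF"
    and z: "\<And>w \<mu>. w \<le> \<nu> \<Longrightarrow> \<mu> \<le> \<nu> \<Longrightarrow> \<not> (\<lambda>j. w j + \<mu> j) \<le> \<nu> \<Longrightarrow> g w \<mu> = (0::real)"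
  shows "(\<Sum>w\<in>{w. w \<le> \<nu>}. \<Sum>\<mu>\<in>{\<mu>. \<mu> \<le> \<nu>}. g w \<mu>)
       = (\<Sum>k\<in>{k. k \<le> \<nu>}. \<Sum>w\<in>{w. w \<le> k}. g w (k - w))"
proof -
  let ?B = "{m. m \<le> \<nu>}"
  have fB: "finite ?B" by (rule box_finite[OF \<nu>])
  let ?T = "{p \<in> ?B \<times> ?B. (\<lambda>j. fst p j + snd p j) \<le> \<nu>}"
  have "(\<Sum>w\<in>?B. \<Sum>\<mu>\<in>?B. g w \<mu>) = (\<Sum>p\<in>?B \<times> ?B. g (fst p) (snd p))"
    by (simp add: sum.cartesian_product case_prod_beta)
  also have "\<dots> = (\<Sum>p\<in>?T. g (fst p) (snd p))"
    by (rule sum.mono_neutral_right) (use fB z in \<open>auto, blast\<close>)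
  also have "\<dots> = (\<Sum>p\<in>Sigma ?B (\<lambda>k. {w. w \<le> k}). g (snd p) (fst p - snd p))"
  proof (rule sum.reindex_bij_witness[where i="\<lambda>p. (snd p, fst p - snd p)" and j="\<lambda>p. (\<lambda>j. fst p j + snd p j, fst p)"])
    fix a assume a: "a \<in> ?T"
    then show "(snd (\<lambda>j. fst a j + snd a j, fst a), fst (\<lambda>j. fst a j + snd a j, fst a) - snd (\<lambda>j. fst a j + snd a j, fst a)) = a"
      by (auto simp: fun_eq_iff)
    show "(\<lambda>j. fst a j + snd a j, fst a) \<in> Sigma ?B (\<lambda>k. {w. w \<le> k})"
      using a by (auto simp: le_fun_def)
    have e: "(\<lambda>j. fst a j + snd a j) - fst a = snd a" by (auto simp: fun_eq_iff)
    then show "g (snd (\<lambda>j. fst a j + snd a j, fst a)) (fst (\<lambda>j. fst a j + snd a j, fst a) - snd (\<lambda>j. fst a j + snd a j, fst a)) = g (fst a) (snd a)"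
      by simp
  next
    fix b assume b: "b \<in> Sigma ?B (\<lambda>k. {w. w \<le> k})"
    then show "(\<lambda>j. fst (snd b, fst b - snd b) j + snd (snd b, fst b - snd b) j, fst (snd b, fst b - snd b)) = b"
      by (auto simp: fun_eq_iff le_fun_def)
    show "(snd b, fst b - snd b) \<in> ?T"
    proof -
      have 1: "\<forall>j. fst b j \<le> \<nu> j" "\<forall>j. snd b j \<le> fst b j" using b by (auto simp: le_fun_def)
      have "\<forall>j. snd b j \<le> \<nu> j" "\<forall>j. fst b j - snd b j \<le> \<nu> j" "\<forall>j. snd b j + (fst b j - snd b j) \<le> \<nu> j"
        using 1 by (auto intro: le_trans, metis diff_le_self le_trans)
      then show ?thesis by (auto simp: le_fun_def)
    qed
  qed
  also have "\<dots> = (\<Sum>k\<in>?B. \<Sum>w\<in>{w. w \<le> k}. g w (k - w))"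
    by (subst sum.Sigma) (use fB box_finite le_mF[OF \<nu>] in \<open>auto simp: case_prod_beta\<close>)
  finally show ?thesis .
qed


lemma mabs_zero[simp]: "mabs mzero = 0" by (simp add: mabs_def)
lemma mfact_zero[simp]: "mfact mzero = 1" by (simp add: mfact_def)
lemma mpow_zero[simp]: "mpow \<beta> mzero = 1" by (simp add: mpow_def)
lemma mStir_zero_zero[simp]: "mStir mzero mzero = 1" by (simp add: mStir_def)

lemma Gf_zero: "Gf \<beta> mzero = 1"
proof -
  have "{\<mu>. \<mu> \<le> mzero} = {mzero}" using le_mzero by auto
  then show ?thesis unfolding Gf_def by simp
qed

lemma mbinom_self: "mbinom \<nu> \<nu> = 1"
  unfolding mbinom_def by simp

lemma diff_self_mzero: "(\<nu>::mindex) - \<nu> = mzero"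
  by (simp add: fun_eq_iff mzero_def)

lemma sum3_distrib:
  fixes f :: "'a \<Rightarrow> real"
  shows "(\<Sum>m\<in>M. f m * (\<Sum>w\<in>W. g m w) * (\<Sum>u\<in>U. h m u)) = (\<Sum>m\<in>M. \<Sum>w\<in>W. \<Sum>u\<in>U. (f m * g m w) * h m u)"
  by (simp only: sum_distrib_left[symmetric] sum_distrib_right[symmetric])

lemma sum3_swap:
  "(\<Sum>m\<in>M. \<Sum>w\<in>W. \<Sum>u\<in>U. F m w u) = (\<Sum>w\<in>W. \<Sum>u\<in>U. \<Sum>m\<in>M. F m w u)"
proof -
  have "(\<Sum>m\<in>M. \<Sum>w\<in>W. \<Sum>u\<in>U. F m w u) = (\<Sum>w\<in>W. \<Sum>m\<in>M. \<Sum>u\<in>U. F m w u)"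
    by (rule sum.swap)
  also have "\<dots> = (\<Sum>w\<in>W. \<Sum>u\<in>U. \<Sum>m\<in>M. F m w u)"
    by (intro sum.cong refl sum.swap)
  finally show ?thesis .
qed

lemma aux2: "(mf::real) * R + F = P * mf \<Longrightarrow> mf * mp * ms * (P + R) + F * mp * ms = 2 * (P * mf * mp * ms)"
proof -
  assume h: "mf * R + F = P * mf"
  have "mf * mp * ms * (P + R) + F * mp * ms = mp * ms * (mf * P) + mp * ms * (mf * R + F)"
    by (simp add: algebra_simps)
  also have "\<dots> = 2 * (P * mf * mp * ms)" unfolding h by (simp add: algebra_simps)
  finally show ?thesis .
qed

lemma KEY:
  assumes \<nu>: "\<nu> \<in> mF"
  shows "Qf d \<beta> \<nu> = (\<Sum>m\<in>{m. m \<le> \<nu> \<and> m \<noteq> \<nu>}. mbinom \<nu> m * Qf d \<beta> m * Gf \<beta> (\<nu> - m)) + Hf d \<beta> \<nu>"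
proof -
  let ?B = "{m. m \<le> \<nu>}"
  let ?S = "{m. m \<le> \<nu> \<and> m \<noteq> \<nu>}"
  have fB: "finite ?B" by (rule box_finite[OF \<nu>])
  define A where "A w = PP d w * mfact w * mpow \<beta> w" for w
  define Bf where "Bf \<mu> = fact (mabs \<mu> + 1) * mfact \<mu> * mpow \<beta> \<mu>" for \<mu>
  define T where "T = (\<Sum>m\<in>?B. mbinom \<nu> m * Qf d \<beta> m * Gf \<beta> (\<nu> - m))"
  have Bins: "?B = insert \<nu> ?S" by auto
  have Ta: "T = (\<Sum>m\<in>?S. mbinom \<nu> m * Qf d \<beta> m * Gf \<beta> (\<nu> - m)) + Qf d \<beta> \<nu>"
    unfolding T_def Bins using fB Bins
    by (subst sum.insert) (auto simp: mbinom_self diff_self_mzero Gf_zero)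
  have "T = (\<Sum>m\<in>?B. mbinom \<nu> m * (\<Sum>w\<in>?B. A w * mStir m w) * (\<Sum>\<mu>\<in>?B. Bf \<mu> * mStir (\<nu> - m) \<mu>))"
    unfolding T_def
  proof (intro sum.cong refl)
    fix m assume m: "m \<in> ?B"
    have "Qf d \<beta> m = (\<Sum>w\<in>?B. A w * mStir m w)"
      unfolding Qf_def A_def by (rule box_ext[OF \<nu>]) (use m in auto)
    moreover have "Gf \<beta> (\<nu> - m) = (\<Sum>\<mu>\<in>?B. Bf \<mu> * mStir (\<nu> - m) \<mu>)"
      unfolding Gf_def Bf_def by (rule box_ext[OF \<nu>]) (auto simp: le_fun_def)
    ultimately show "mbinom \<nu> m * Qf d \<beta> m * Gf \<beta> (\<nu> - m) =
        mbinom \<nu> m * (\<Sum>w\<in>?B. A w * mStir m w) * (\<Sum>\<mu>\<in>?B. Bf \<mu> * mStir (\<nu> - m) \<mu>)" by simp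
  qed
  also have "\<dots> = (\<Sum>w\<in>?B. \<Sum>\<mu>\<in>?B. \<Sum>m\<in>?B. (mbinom \<nu> m * (A w * mStir m w)) * (Bf \<mu> * mStir (\<nu> - m) \<mu>))"
    unfolding sum3_distrib by (rule sum3_swap)
  also have "\<dots> = (\<Sum>w\<in>?B. \<Sum>\<mu>\<in>?B. PP d w * fact (mabs \<mu> + 1) *
       (mfact (\<lambda>j. w j + \<mu> j) * mpow \<beta> (\<lambda>j. w j + \<mu> j) * mStir \<nu> (\<lambda>j. w j + \<mu> j)))"
  proof (intro sum.cong refl)
    fix w \<mu> assume w: "w \<in> ?B" and \<mu>: "\<mu> \<in> ?B"
    have "(\<Sum>m\<in>?B. (mbinom \<nu> m * (A w * mStir m w)) * (Bf \<mu> * mStir (\<nu> - m) \<mu>))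
       = PP d w * fact (mabs \<mu> + 1) * (\<Sum>m\<in>?B. mbinom \<nu> m * mStir m w * mStir (\<nu> - m) \<mu>
            * mfact w * mfact \<mu> * mpow \<beta> w * mpow \<beta> \<mu>)"
      unfolding sum_distrib_left A_def Bf_def by (intro sum.cong refl) (simp add: algebra_simps)
    also have "\<dots> = PP d w * fact (mabs \<mu> + 1) *
       (mfact (\<lambda>j. w j + \<mu> j) * mpow \<beta> (\<lambda>j. w j + \<mu> j) * mStir \<nu> (\<lambda>j. w j + \<mu> j))"
      using L3[OF \<nu>, of w \<mu> \<beta>] w \<mu> by simp
    finally show "(\<Sum>m\<in>?B. (mbinom \<nu> m * (A w * mStir m w)) * (Bf \<mu> * mStir (\<nu> - m) \<mu>)) = PP d w * fact (mabs \<mu> + 1) *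
       (mfact (\<lambda>j. w j + \<mu> j) * mpow \<beta> (\<lambda>j. w j + \<mu> j) * mStir \<nu> (\<lambda>j. w j + \<mu> j))" .
  qed
  also have "\<dots> = (\<Sum>k\<in>?B. \<Sum>w\<in>{w. w \<le> k}. PP d w * fact (mabs (k - w) + 1) *
       (mfact (\<lambda>j. w j + (k - w) j) * mpow \<beta> (\<lambda>j. w j + (k - w) j) * mStir \<nu> (\<lambda>j. w j + (k - w) j)))"
  proof (rule RI[OF \<nu>])
    fix w \<mu> :: mindex assume w: "w \<le> \<nu>" and \<mu>: "\<mu> \<le> \<nu>" and n: "\<not> (\<lambda>j. w j + \<mu> j) \<le> \<nu>"
    have "(\<lambda>j. w j + \<mu> j) \<in> mF"
    proof -
      have "{j. w j + \<mu> j \<noteq> 0} \<subseteq> {j. w j \<noteq> 0} \<union> {j. \<mu> j \<noteq> 0}" by auto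
      moreover have "finite ({j. w j \<noteq> 0} \<union> {j. \<mu> j \<noteq> 0})"
        using le_mF[OF \<nu> w] le_mF[OF \<nu> \<mu>] unfolding mF_def msupp_def by auto
      ultimately show ?thesis unfolding mF_def msupp_def using finite_subset by auto
    qed
    then have "mStir \<nu> (\<lambda>j. w j + \<mu> j) = 0" using mStir_zero[OF \<nu> _ n] by simp
    then show "PP d w * fact (mabs \<mu> + 1) *
       (mfact (\<lambda>j. w j + \<mu> j) * mpow \<beta> (\<lambda>j. w j + \<mu> j) * mStir \<nu> (\<lambda>j. w j + \<mu> j)) = 0" by simp
  qed
  also have "\<dots> = (\<Sum>k\<in>?B. mfact k * mpow \<beta> k * mStir \<nu> k *
        (PP d k + (\<Sum>w\<in>{w. w \<le> k \<and> w \<noteq> k}. PP d w * fact (mabs k - mabs w + 1))))"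
  proof (intro sum.cong refl)
    fix k assume k: "k \<in> ?B"
    have kF: "k \<in> mF" using le_mF[OF \<nu>] k by auto
    have fk: "finite {w. w \<le> k}" by (rule box_finite[OF kF])
    have Kins: "{w. w \<le> k} = insert k {w. w \<le> k \<and> w \<noteq> k}" by auto
    have "(\<Sum>w\<in>{w. w \<le> k}. PP d w * fact (mabs (k - w) + 1) *
       (mfact (\<lambda>j. w j + (k - w) j) * mpow \<beta> (\<lambda>j. w j + (k - w) j) * mStir \<nu> (\<lambda>j. w j + (k - w) j)))
      = (\<Sum>w\<in>{w. w \<le> k}. (mfact k * mpow \<beta> k * mStir \<nu> k) * (PP d w * fact (mabs k - mabs w + 1)))"
    proof (intro sum.cong refl)
      fix w assume w: "w \<in> {w. w \<le> k}"
      have e: "(\<lambda>j. w j + (k - w) j) = k" using w by (auto simp: fun_eq_iff le_fun_def)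
      show "PP d w * fact (mabs (k - w) + 1) *
       (mfact (\<lambda>j. w j + (k - w) j) * mpow \<beta> (\<lambda>j. w j + (k - w) j) * mStir \<nu> (\<lambda>j. w j + (k - w) j))
        = (mfact k * mpow \<beta> k * mStir \<nu> k) * (PP d w * fact (mabs k - mabs w + 1))"
        unfolding e using mabs_diff(1)[OF kF, of w] w by simp
    qed
    also have "\<dots> = mfact k * mpow \<beta> k * mStir \<nu> k * (\<Sum>w\<in>{w. w \<le> k}. PP d w * fact (mabs k - mabs w + 1))"
      by (simp add: sum_distrib_left)
    also have "(\<Sum>w\<in>{w. w \<le> k}. PP d w * fact (mabs k - mabs w + 1))
       = PP d k + (\<Sum>w\<in>{w. w \<le> k \<and> w \<noteq> k}. PP d w * fact (mabs k - mabs w + 1))"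
      by (subst Kins, subst sum.insert) (use fk Kins in auto)
    finally show "(\<Sum>w\<in>{w. w \<le> k}. PP d w * fact (mabs (k - w) + 1) *
       (mfact (\<lambda>j. w j + (k - w) j) * mpow \<beta> (\<lambda>j. w j + (k - w) j) * mStir \<nu> (\<lambda>j. w j + (k - w) j)))
      = mfact k * mpow \<beta> k * mStir \<nu> k *
        (PP d k + (\<Sum>w\<in>{w. w \<le> k \<and> w \<noteq> k}. PP d w * fact (mabs k - mabs w + 1)))" .
  qed
  finally have Tb: "T = \<dots>" .
  have "T + Hf d \<beta> \<nu> = 2 * Qf d \<beta> \<nu>"
    unfolding Tb Hf_def Qf_def sum.distrib[symmetric] sum_distrib_left
  proof (intro sum.cong refl)
    fix k assume k: "k \<in> ?B"
    have kF: "k \<in> mF" using le_mF[OF \<nu>] k by auto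
    show "mfact k * mpow \<beta> k * mStir \<nu> k *
        (PP d k + (\<Sum>w\<in>{w. w \<le> k \<and> w \<noteq> k}. PP d w * fact (mabs k - mabs w + 1))) +
        fact (mabs k + d) / fact d * mpow \<beta> k * mStir \<nu> k =
        2 * (PP d k * mfact k * mpow \<beta> k * mStir \<nu> k)"
      by (rule aux2) (rule PP_rec[OF kF])
  qed
  then show ?thesis using Ta by linarith
qed


lemma conc_eq: "concRHS c0 c d \<beta> \<nu> = c0 * c ^ mabs \<nu> * Qf d \<beta> \<nu>"
  unfolding concRHS_def Qf_def ..

lemma hyp_eq: "hypRHS c0 c d \<beta> \<Upsilon> \<nu> =
   (\<Sum>m\<in>{m. m \<le> \<nu> \<and> m \<noteq> \<nu>}. mbinom \<nu> m * \<Upsilon> m * c ^ mabs (\<nu> - m) * Gf \<beta> (\<nu> - m))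
   + c0 * c ^ mabs \<nu> * Hf d \<beta> \<nu>"
  unfolding hypRHS_def Gf_def Hf_def ..

lemma conc_fix:
  assumes \<nu>: "\<nu> \<in> mF"
  shows "hypRHS c0 c d \<beta> (concRHS c0 c d \<beta>) \<nu> = concRHS c0 c d \<beta> \<nu>"
proof -
  have "(\<Sum>m\<in>{m. m \<le> \<nu> \<and> m \<noteq> \<nu>}. mbinom \<nu> m * concRHS c0 c d \<beta> m * c ^ mabs (\<nu> - m) * Gf \<beta> (\<nu> - m))
     = (\<Sum>m\<in>{m. m \<le> \<nu> \<and> m \<noteq> \<nu>}. c0 * c ^ mabs \<nu> * (mbinom \<nu> m * Qf d \<beta> m * Gf \<beta> (\<nu> - m)))"
  proof (intro sum.cong refl)
    fix m assume m: "m \<in> {m. m \<le> \<nu> \<and> m \<noteq> \<nu>}"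
    have "mabs m + mabs (\<nu> - m) = mabs \<nu>" using mabs_diff[OF \<nu>, of m] m by auto
    then have "c ^ mabs m * c ^ mabs (\<nu> - m) = c ^ mabs \<nu>" by (metis power_add)
    then show "mbinom \<nu> m * concRHS c0 c d \<beta> m * c ^ mabs (\<nu> - m) * Gf \<beta> (\<nu> - m) =
       c0 * c ^ mabs \<nu> * (mbinom \<nu> m * Qf d \<beta> m * Gf \<beta> (\<nu> - m))"
      unfolding conc_eq by (simp add: algebra_simps)
  qed
  then show ?thesis
    unfolding hyp_eq
    by (simp add: sum_distrib_left[symmetric] distrib_left[symmetric] KEY[OF \<nu>, symmetric] conc_eq)
qed

lemma Gf_nonneg: "(\<And>j. \<beta> j \<ge> 0) \<Longrightarrow> Gf \<beta> \<rho> \<ge> 0"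
  unfolding Gf_def mfact_def mpow_def mStir_def
  by (intro sum_nonneg mult_nonneg_nonneg prod_nonneg) auto

lemma mbinom_nonneg: "mbinom \<nu> m \<ge> 0"
  unfolding mbinom_def by (intro prod_nonneg) auto

theorem lemmaA5:
  fixes c0 c :: real and d :: nat and \<beta> :: "nat \<Rightarrow> real" and \<Upsilon> :: "mindex \<Rightarrow> real"
  assumes "c0 > 0" and "c > 0" and "d \<ge> 1"
    and "\<And>j. \<beta> j \<ge> 0"
    and "\<And>\<nu>. \<nu> \<in> mF \<Longrightarrow> \<Upsilon> \<nu> \<ge> 0"
  shows "(\<Upsilon> mzero \<le> c0 \<and> (\<forall>\<nu>\<in>mF. \<Upsilon> \<nu> \<le> hypRHS c0 c d \<beta> \<Upsilon> \<nu>)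
           \<longrightarrow> (\<forall>\<nu>\<in>mF. \<Upsilon> \<nu> \<le> concRHS c0 c d \<beta> \<nu>))
       \<and> (\<Upsilon> mzero = c0 \<and> (\<forall>\<nu>\<in>mF. \<Upsilon> \<nu> = hypRHS c0 c d \<beta> \<Upsilon> \<nu>)
           \<longrightarrow> (\<forall>\<nu>\<in>mF. \<Upsilon> \<nu> = concRHS c0 c d \<beta> \<nu>))"
proof (intro conjI impI)
  let ?C = "concRHS c0 c d \<beta>"
  assume H: "\<Upsilon> mzero \<le> c0 \<and> (\<forall>\<nu>\<in>mF. \<Upsilon> \<nu> \<le> hypRHS c0 c d \<beta> \<Upsilon> \<nu>)"
  have "\<forall>\<nu>. \<nu> \<in> mF \<longrightarrow> mabs \<nu> = n \<longrightarrow> \<Upsilon> \<nu> \<le> ?C \<nu>" for n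
  proof (induction n rule: less_induct)
    case (less n)
    show ?case
    proof (intro allI impI)
      fix \<nu> assume \<nu>: "\<nu> \<in> mF" and n: "mabs \<nu> = n"
      have "hypRHS c0 c d \<beta> \<Upsilon> \<nu> \<le> hypRHS c0 c d \<beta> ?C \<nu>"
        unfolding hyp_eq
      proof (intro add_right_mono sum_mono)
        fix m assume m: "m \<in> {m. m \<le> \<nu> \<and> m \<noteq> \<nu>}"
        have "mabs m < n" using mabs_less[OF \<nu>] m n by auto
        moreover have "m \<in> mF" using le_mF[OF \<nu>] m by auto
        ultimately have le: "\<Upsilon> m \<le> ?C m" using less by blast
        show "mbinom \<nu> m * \<Upsilon> m * c ^ mabs (\<nu> - m) * Gf \<beta> (\<nu> - m)
            \<le> mbinom \<nu> m * ?C m * c ^ mabs (\<nu> - m) * Gf \<beta> (\<nu> - m)"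
          using le assms(2,4) Gf_nonneg[of \<beta>] mbinom_nonneg[of \<nu> m]
          by (intro mult_right_mono mult_left_mono) auto
      qed
      then show "\<Upsilon> \<nu> \<le> ?C \<nu>" using H \<nu> conc_fix[OF \<nu>] by fastforce
    qed
  qed
  then show "\<forall>\<nu>\<in>mF. \<Upsilon> \<nu> \<le> ?C \<nu>" by blast
next
  let ?C = "concRHS c0 c d \<beta>"
  assume H: "\<Upsilon> mzero = c0 \<and> (\<forall>\<nu>\<in>mF. \<Upsilon> \<nu> = hypRHS c0 c d \<beta> \<Upsilon> \<nu>)"
  have "\<forall>\<nu>. \<nu> \<in> mF \<longrightarrow> mabs \<nu> = n \<longrightarrow> \<Upsilon> \<nu> = ?C \<nu>" for n
  proof (induction n rule: less_induct)
    case (less n)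
    show ?case
    proof (intro allI impI)
      fix \<nu> assume \<nu>: "\<nu> \<in> mF" and n: "mabs \<nu> = n"
      have "hypRHS c0 c d \<beta> \<Upsilon> \<nu> = hypRHS c0 c d \<beta> ?C \<nu>"
        unfolding hyp_eq
      proof (intro arg_cong2[where f="(+)"] sum.cong refl)
        fix m assume m: "m \<in> {m. m \<le> \<nu> \<and> m \<noteq> \<nu>}"
        have "mabs m < n" using mabs_less[OF \<nu>] m n by auto
        moreover have "m \<in> mF" using le_mF[OF \<nu>] m by auto
        ultimately have "\<Upsilon> m = ?C m" using less by blast
        then show "mbinom \<nu> m * \<Upsilon> m * c ^ mabs (\<nu> - m) * Gf \<beta> (\<nu> - m)
            = mbinom \<nu> m * ?C m * c ^ mabs (\<nu> - m) * Gf \<beta> (\<nu> - m)" by simp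
      qed
      then show "\<Upsilon> \<nu> = ?C \<nu>" using H \<nu> conc_fix[OF \<nu>] by fastforce
    qed
  qed
  then show "\<forall>\<nu>\<in>mF. \<Upsilon> \<nu> = ?C \<nu>" by blast
qed


end
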